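(* Let $K\ge1$, let $q_1,\dots,q_K$ be distinct primes satisfying $\tfrac12<q_j/q_{j'}<2$ for all $j,j'$, and let $\phi:\mathbb Z\to\mathbb R$ have finite support. Then for every $\tilde\lambda>0$, $$\#\{n\in\mathbb Z:\ \mathcal B^*(\phi,n)>\tilde\lambda\}\le\frac{4}{\tilde\lambda}\,\|\phi\|_{\ell^1}.$$
   Context: Let $p=q_1q_2\cdots q_K$ and $\tilde q_j=p/q_j$. For $n\in\mathbb Z$ and integer $N\ge1$ put $t_0(n,N)=\lfloor n/p\rfloor+1$, $t_1(n,N)=\lfloor (n+N)/p\rfloor+1$, $N'=t_1(n,N)-t_0(n,N)+1$, $I(n,N)=[(t_0(n,N)-1)p-n,\ t_1(n,N)p-n)\cap\mathbb Z$, and $\nu(n,N,j)=N'\tilde q_j$. Define $$\mathcal B(\phi,n,N,j)=\frac1{\nu(n,N,j)}\sum_{l\in\mathbb Z:\ lq_j\in I(n,N)}\phi(n+lq_j),\qquad \mathcal B(\phi,n,N)=\frac{\sum_{j=1}^K\nu(n,N,j)\,\mathcal B(\phi,n,N,j)}{\sum_{j=1}^K\nu(n,N,j)},$$ and $\mathcal B^*(\phi,n)=\sup_{N\ge1}|\mathcal B(\phi,n,N)|$. $\|\phi\|_{\ell^1}=\sum_{n\in\mathbb Z}|\phi(n)|$. *)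

theory Defs
  imports "HOL-Analysis.Analysis"
begin

definition pprod :: "nat \<Rightarrow> (nat \<Rightarrow> int) \<Rightarrow> int" where
  "pprod K q = (\<Prod>j=1..K. q j)"

definition qtilde :: "nat \<Rightarrow> (nat \<Rightarrow> int) \<Rightarrow> nat \<Rightarrow> int" where
  "qtilde K q j = pprod K q div q j"

definition t0 :: "nat \<Rightarrow> (nat \<Rightarrow> int) \<Rightarrow> int \<Rightarrow> nat \<Rightarrow> int" where
  "t0 K q n N = \<lfloor>real_of_int n / real_of_int (pprod K q)\<rfloor> + 1"

definition t1 :: "nat \<Rightarrow> (nat \<Rightarrow> int) \<Rightarrow> int \<Rightarrow> nat \<Rightarrow> int" where
  "t1 K q n N = \<lfloor>real_of_int (n + int N) / real_of_int (pprod K q)\<rfloor> + 1"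

definition Nprime :: "nat \<Rightarrow> (nat \<Rightarrow> int) \<Rightarrow> int \<Rightarrow> nat \<Rightarrow> int" where
  "Nprime K q n N = t1 K q n N - t0 K q n N + 1"

definition Iset :: "nat \<Rightarrow> (nat \<Rightarrow> int) \<Rightarrow> int \<Rightarrow> nat \<Rightarrow> int set" where
  "Iset K q n N = {(t0 K q n N - 1) * pprod K q - n ..< t1 K q n N * pprod K q - n}"

definition nu :: "nat \<Rightarrow> (nat \<Rightarrow> int) \<Rightarrow> int \<Rightarrow> nat \<Rightarrow> nat \<Rightarrow> int" where
  "nu K q n N j = Nprime K q n N * qtilde K q j"

definition Bj :: "nat \<Rightarrow> (nat \<Rightarrow> int) \<Rightarrow> (int \<Rightarrow> real) \<Rightarrow> int \<Rightarrow> nat \<Rightarrow> nat \<Rightarrow> real" where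
  "Bj K q \<phi> n N j = (1 / real_of_int (nu K q n N j)) *
     (\<Sum>l\<in>{l::int. l * q j \<in> Iset K q n N}. \<phi> (n + l * q j))"

definition B :: "nat \<Rightarrow> (nat \<Rightarrow> int) \<Rightarrow> (int \<Rightarrow> real) \<Rightarrow> int \<Rightarrow> nat \<Rightarrow> real" where
  "B K q \<phi> n N = (\<Sum>j=1..K. real_of_int (nu K q n N j) * Bj K q \<phi> n N j)
                   / (\<Sum>j=1..K. real_of_int (nu K q n N j))"

definition Bstar :: "nat \<Rightarrow> (nat \<Rightarrow> int) \<Rightarrow> (int \<Rightarrow> real) \<Rightarrow> int \<Rightarrow> ereal" where
  "Bstar K q \<phi> n = (SUP N\<in>{1..}. ereal \<bar>B K q \<phi> n N\<bar>)"

definition l1norm :: "(int \<Rightarrow> real) \<Rightarrow> real" where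
  "l1norm \<phi> = (\<Sum>n\<in>{n. \<phi> n \<noteq> 0}. \<bar>\<phi> n\<bar>)"

end

theory Submission
  imports Defs
begin

lemma block_iff:
  fixes p m a b :: int
  assumes p: "p > 0"
  shows "(a * p \<le> m \<and> m < (b + 1) * p) \<longleftrightarrow> (a \<le> m div p \<and> m div p \<le> b)"
proof -
  define d where "d = m div p"
  have m: "m = d * p + m mod p" "0 \<le> m mod p" "m mod p < p" using p by (auto simp: d_def)
  have 1: "a * p \<le> m \<longleftrightarrow> a \<le> d"
  proof
    assume "a \<le> d" hence "a * p \<le> d * p" using p by simp
    thus "a * p \<le> m" using m by linarith
  next
    assume h: "a * p \<le> m"
    show "a \<le> d"
    proof (rule ccontr)
      assume "\<not> a \<le> d" hence "(d + 1) * p \<le> a * p" using p by simp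
      thus False using h m by (simp add: algebra_simps)
    qed
  qed
  have 2: "m < (b + 1) * p \<longleftrightarrow> d \<le> b"
  proof
    assume "d \<le> b" hence "d * p \<le> b * p" using p by simp
    moreover have "m < d * p + p" using m by linarith
    moreover have "(b + 1) * p = b * p + p" by (simp add: algebra_simps)
    ultimately show "m < (b + 1) * p" by linarith
  next
    assume h: "m < (b + 1) * p"
    show "d \<le> b"
    proof (rule ccontr)
      assume "\<not> d \<le> b" hence "(b + 1) * p \<le> d * p" using p by simp
      thus False using h m by linarith
    qed
  qed
  show ?thesis using 1 2 d_def by simp
qed

lemma count_res:
  fixes q p m :: int
  assumes q: "q > 0" and qp: "q dvd p" and p: "p > 0"
  shows "card {r\<in>{0..<p}. q dvd (m - r)} = nat (p div q)"
proof -
  obtain t where t: "p = q * t" using qp by blast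
  have tdiv: "p div q = t" using t q by simp
  have "{r\<in>{0..<p}. q dvd (m - r)} = (\<lambda>k. m mod q + q * k) ` {0..<t}"
  proof (intro set_eqI iffI)
    fix r assume r: "r \<in> {r\<in>{0..<p}. q dvd (m - r)}"
    hence "r mod q = m mod q" by (metis (mono_tags) mem_Collect_eq mod_eq_dvd_iff)
    moreover have "r div q < t"
    proof (rule ccontr)
      assume "\<not> r div q < t" hence "t * q \<le> r div q * q" using q by simp
      moreover have "r div q * q \<le> r" using q
        by (metis minus_mod_eq_div_mult diff_le_eq le_add_same_cancel1 pos_mod_sign)
      ultimately show False using r t by (simp add: mult.commute)
    qed
    moreover have "r div q \<ge> 0" using r q by (simp add: pos_imp_zdiv_nonneg_iff)
    moreover have "r = r mod q + q * (r div q)" by simp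
    ultimately show "r \<in> (\<lambda>k. m mod q + q * k) ` {0..<t}"
      by (intro image_eqI[of _ _ "r div q"]) auto
  next
    fix r assume "r \<in> (\<lambda>k. m mod q + q * k) ` {0..<t}"
    then obtain k where k: "0 \<le> k" "k < t" "r = m mod q + q * k" by auto
    have "q * (k + 1) \<le> q * t" using k q by (intro mult_left_mono) auto
    moreover have "m mod q < q" "m mod q \<ge> 0" using q by auto
    moreover have "q * k \<ge> 0" using k q by simp
    moreover have "q dvd (m - r)" using k by (simp add: mod_eq_dvd_iff[symmetric])
    ultimately show "r \<in> {r\<in>{0..<p}. q dvd (m - r)}" using k t
      by (auto simp: algebra_simps)
  qed
  moreover have "inj_on (\<lambda>k. m mod q + q * k) {0..<t}" using q by (auto simp: inj_on_def)
  ultimately show ?thesis using tdiv by (simp add: card_image)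
qed
lemma onesided_aux:
  fixes f :: "int \<Rightarrow> real" and D :: "int set" and c :: real
  assumes f0: "\<And>t. f t \<ge> 0" and Df: "finite D" and Ds: "\<And>t. f t \<noteq> 0 \<Longrightarrow> t \<in> D"
  shows "finite A \<Longrightarrow> A \<subseteq> {a. \<exists>b\<ge>a. c * real_of_int (b - a + 1) < (\<Sum>t\<in>{a..b}. f t)}
     \<Longrightarrow> A \<subseteq> {s..} \<Longrightarrow> c \<ge> 0 \<Longrightarrow> c * real (card A) \<le> (\<Sum>t\<in>D \<inter> {s..}. f t)"
proof (induction "card A" arbitrary: A s rule: less_induct)
  case less
  show ?case
  proof (cases "A = {}")
    case True
    then show ?thesis by (simp add: sum_nonneg f0)
  next
    case False
    define a where "a = Min A"
    have aA: "a \<in> A" using False less.prems(1) a_def by simp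
    have amin: "\<And>x. x \<in> A \<Longrightarrow> a \<le> x" using less.prems(1) a_def by simp
    have as: "s \<le> a" using aA less.prems(3) by auto
    obtain b where ab: "b \<ge> a" and bineq: "c * real_of_int (b - a + 1) < (\<Sum>t\<in>{a..b}. f t)"
      using aA less.prems(2) by blast
    define A' where "A' = A \<inter> {b+1..}"
    have fA': "finite A'" using less.prems(1) A'_def by simp
    have lt: "card A' < card A"
    proof (rule psubset_card_mono)
      show "finite A" by (rule less.prems(1))
      have "a \<notin> A'" using ab A'_def by auto
      thus "A' \<subset> A" using aA A'_def by blast
    qed
    have IH: "c * real (card A') \<le> (\<Sum>t\<in>D \<inter> {b+1..}. f t)"
      using less.hyps[OF lt fA'] less.prems A'_def by auto
    have sub: "A \<subseteq> {a..b} \<union> A'" using amin A'_def by auto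
    have "card A \<le> card ({a..b} \<union> A')" using sub fA' by (intro card_mono) auto
    also have "\<dots> \<le> card {a..b} + card A'" by (rule card_Un_le)
    finally have "real (card A) \<le> real_of_int (b - a + 1) + real (card A')"
      using ab by simp
    hence "c * real (card A) \<le> c * real_of_int (b - a + 1) + c * real (card A')"
      using less.prems(4) by (metis distrib_left mult_left_mono)
    also have "\<dots> \<le> (\<Sum>t\<in>{a..b}. f t) + (\<Sum>t\<in>D \<inter> {b+1..}. f t)"
      using bineq IH by linarith
    also have "(\<Sum>t\<in>{a..b}. f t) = (\<Sum>t\<in>D \<inter> {a..b}. f t)"
      using Ds Df by (intro sum.mono_neutral_right) auto
    also have "(\<Sum>t\<in>D \<inter> {a..b}. f t) + (\<Sum>t\<in>D \<inter> {b+1..}. f t)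
        = (\<Sum>t\<in>(D \<inter> {a..b}) \<union> (D \<inter> {b+1..}). f t)"
      using Df by (intro sum.union_disjoint[symmetric]) auto
    also have "\<dots> \<le> (\<Sum>t\<in>D \<inter> {s..}. f t)"
      using Df as ab f0 by (intro sum_mono2) auto
    finally show ?thesis .
  qed
qed

lemma onesided:
  fixes f :: "int \<Rightarrow> real" and D :: "int set" and c :: real
  assumes f0: "\<And>t. f t \<ge> 0" and Df: "finite D" and Ds: "\<And>t. f t \<noteq> 0 \<Longrightarrow> t \<in> D"
    and c: "c > 0"
  shows "finite {a. \<exists>b\<ge>a. c * real_of_int (b - a + 1) < (\<Sum>t\<in>{a..b}. f t)}
     \<and> c * real (card {a. \<exists>b\<ge>a. c * real_of_int (b - a + 1) < (\<Sum>t\<in>{a..b}. f t)}) \<le> (\<Sum>t\<in>D. f t)"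
    (is "finite ?E \<and> _")
proof -
  have key: "c * real (card A) \<le> (\<Sum>t\<in>D. f t)" if "finite A" "A \<subseteq> ?E" for A
  proof -
    define s where "s = (if A = {} then 0 else Min A)"
    define s' where "s' = min s (if D = {} then 0 else Min D)"
    have "A \<subseteq> {s'..}" using that(1) s_def s'_def by (auto intro: min.coboundedI1)
    hence "c * real (card A) \<le> (\<Sum>t\<in>D \<inter> {s'..}. f t)"
      using onesided_aux[OF f0 Df Ds that] c by auto
    also have "D \<inter> {s'..} = D" using Df s'_def by (auto intro: min.coboundedI2)
    finally show ?thesis .
  qed
  have fin: "finite ?E"
  proof (rule ccontr)
    assume "infinite ?E"
    then obtain A where A: "finite A" "card A = nat \<lceil>(\<Sum>t\<in>D. f t) / c\<rceil> + 1" "A \<subseteq> ?E"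
      using infinite_arbitrarily_large by blast
    have "c * real (card A) \<le> (\<Sum>t\<in>D. f t)" using key A by blast
    moreover have "real (card A) > (\<Sum>t\<in>D. f t) / c" using A(2)
      by (smt (verit) of_nat_1 of_nat_add of_nat_nat real_nat_ceiling_ge)
    ultimately show False using c by (simp add: field_simps)
  qed
  show ?thesis using fin key by blast
qed

lemma basic_facts:
  assumes qpos: "\<forall>j\<in>{1..K}. q j > 0"
  shows "pprod K q > 0" and "\<And>j. j \<in> {1..K} \<Longrightarrow> q j dvd pprod K q"
    and "\<And>j. j \<in> {1..K} \<Longrightarrow> q j * qtilde K q j = pprod K q"
    and "\<And>j. j \<in> {1..K} \<Longrightarrow> qtilde K q j > 0"
proof -
  show p: "pprod K q > 0" unfolding pprod_def using qpos by (intro prod_pos) auto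
  show d: "\<And>j. j \<in> {1..K} \<Longrightarrow> q j dvd pprod K q" unfolding pprod_def by auto
  show e: "\<And>j. j \<in> {1..K} \<Longrightarrow> q j * qtilde K q j = pprod K q"
    unfolding qtilde_def using d by simp
  show "\<And>j. j \<in> {1..K} \<Longrightarrow> qtilde K q j > 0"
  proof -
    fix j assume j: "j \<in> {1..K}"
    have "0 < q j * qtilde K q j" using e[OF j] p by simp
    moreover have "q j > 0" using qpos j by blast
    ultimately show "qtilde K q j > 0" by (simp add: zero_less_mult_iff)
  qed
qed

lemma B_bound:
  fixes n :: int and N :: nat and \<phi> :: "int \<Rightarrow> real"
  assumes qpos: "\<forall>j\<in>{1..K}. q j > 0" and K: "K \<ge> 1"
  defines "p \<equiv> pprod K q" and "a \<equiv> n div pprod K q" and "b \<equiv> (n + int N) div pprod K q"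
  shows "\<bar>B K q \<phi> n N\<bar> \<le> (\<Sum>j\<in>{1..K}. \<Sum>m\<in>{m. a*p \<le> m \<and> m < (b+1)*p \<and> q j dvd (m - n)}. \<bar>\<phi> m\<bar>)
      / (real_of_int (b - a + 1) * (\<Sum>j\<in>{1..K}. real_of_int (qtilde K q j)))"
proof -
  note bf = basic_facts[OF qpos]
  have p: "p > 0" using bf p_def by simp
  have t0: "t0 K q n N = a + 1" unfolding t0_def floor_divide_of_int_eq a_def ..
  have t1: "t1 K q n N = b + 1" unfolding t1_def floor_divide_of_int_eq b_def ..
  have ab: "a \<le> b" unfolding a_def b_def using p p_def by (intro zdiv_mono1) auto
  have Np: "Nprime K q n N = b - a + 1" using t0 t1 Nprime_def by simp
  have I: "Iset K q n N = {a*p - n ..< (b+1)*p - n}" using t0 t1 Iset_def p_def by simp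
  define M where "M j = {m. a*p \<le> m \<and> m < (b+1)*p \<and> q j dvd (m - n)}" for j
  define S where "S = (\<Sum>j\<in>{1..K}. real_of_int (qtilde K q j))"
  have Spos: "S > 0" unfolding S_def using bf(4) K by (intro sum_pos) auto
  have finM: "finite (M j)" for j
    by (rule finite_subset[of _ "{a*p..<(b+1)*p}"]) (auto simp: M_def)
  have num: "real_of_int (nu K q n N j) * Bj K q \<phi> n N j = (\<Sum>m\<in>M j. \<phi> m)"
    if j: "j \<in> {1..K}" for j
  proof -
    have qj: "q j > 0" using qpos j by blast
    have "nu K q n N j = (b - a + 1) * qtilde K q j" using Np nu_def by simp
    moreover have "(b - a + 1) * qtilde K q j > 0" using ab bf(4)[OF j] by simp
    ultimately have nz: "real_of_int (nu K q n N j) \<noteq> 0" by (metis of_int_eq_0_iff less_irrefl)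
    have img: "(\<lambda>l. n + l * q j) ` {l. l * q j \<in> Iset K q n N} = M j"
    proof (intro set_eqI iffI)
      fix m assume "m \<in> (\<lambda>l. n + l * q j) ` {l. l * q j \<in> Iset K q n N}"
      thus "m \<in> M j" using I by (auto simp: M_def)
    next
      fix m assume m: "m \<in> M j"
      then obtain k where k: "m - n = q j * k" unfolding M_def by blast
      show "m \<in> (\<lambda>l. n + l * q j) ` {l. l * q j \<in> Iset K q n N}"
        using m k I by (intro image_eqI[of _ _ k]) (auto simp: M_def mult.commute)
    qed
    have inj: "inj_on (\<lambda>l. n + l * q j) {l. l * q j \<in> Iset K q n N}"
      using qj by (auto simp: inj_on_def)
    have "(\<Sum>m\<in>M j. \<phi> m) = (\<Sum>l\<in>{l. l * q j \<in> Iset K q n N}. \<phi> (n + l * q j))"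
      using sum.reindex[OF inj, of \<phi>] img by (simp add: o_def)
    thus ?thesis using nz unfolding Bj_def by simp
  qed
  have den: "(\<Sum>j=1..K. real_of_int (nu K q n N j)) = real_of_int (b - a + 1) * S"
    unfolding S_def nu_def Np by (simp add: sum_distrib_left)
  have "B K q \<phi> n N = (\<Sum>j=1..K. \<Sum>m\<in>M j. \<phi> m) / (real_of_int (b - a + 1) * S)"
    unfolding B_def den using num by simp
  hence "\<bar>B K q \<phi> n N\<bar> = \<bar>\<Sum>j=1..K. \<Sum>m\<in>M j. \<phi> m\<bar> / (real_of_int (b - a + 1) * S)"
    using ab Spos by simp
  also have "\<dots> \<le> (\<Sum>j=1..K. \<Sum>m\<in>M j. \<bar>\<phi> m\<bar>) / (real_of_int (b - a + 1) * S)"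
  proof (rule divide_right_mono)
    have "\<bar>\<Sum>j=1..K. \<Sum>m\<in>M j. \<phi> m\<bar> \<le> (\<Sum>j=1..K. \<bar>\<Sum>m\<in>M j. \<phi> m\<bar>)" by (rule sum_abs)
    also have "\<dots> \<le> (\<Sum>j=1..K. \<Sum>m\<in>M j. \<bar>\<phi> m\<bar>)" by (intro sum_mono sum_abs)
    finally show "\<bar>\<Sum>j=1..K. \<Sum>m\<in>M j. \<phi> m\<bar> \<le> (\<Sum>j=1..K. \<Sum>m\<in>M j. \<bar>\<phi> m\<bar>)" .
    show "0 \<le> real_of_int (b - a + 1) * S" using ab Spos by simp
  qed
  finally show ?thesis unfolding M_def S_def .
qed

theorem lemma4p4:
  fixes K :: nat and q :: "nat \<Rightarrow> int" and \<phi> :: "int \<Rightarrow> real" and lam :: real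
  assumes "K \<ge> 1"
    and "\<forall>j\<in>{1..K}. prime (q j)"
    and "inj_on q {1..K}"
    and "\<forall>j\<in>{1..K}. \<forall>j'\<in>{1..K}. 1/2 < real_of_int (q j) / real_of_int (q j')
                                   \<and> real_of_int (q j) / real_of_int (q j') < 2"
    and "finite {n. \<phi> n \<noteq> 0}"
    and "lam > 0"
  shows "finite {n::int. Bstar K q \<phi> n > ereal lam}
         \<and> real (card {n::int. Bstar K q \<phi> n > ereal lam}) \<le> 4 / lam * l1norm \<phi>"
proof -
  have qpos: "\<forall>j\<in>{1..K}. q j > 0" using assms(2) by (simp add: prime_gt_0_int)
  note bf = basic_facts[OF qpos]
  define p where "p = pprod K q"
  have p: "p > 0" using bf p_def by simp
  define supp where "supp = {m. \<phi> m \<noteq> 0}"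
  have fsupp: "finite supp" using assms(5) supp_def by simp
  define S where "S = (\<Sum>j\<in>{1..K}. real_of_int (qtilde K q j))"
  have Spos: "S > 0" unfolding S_def using bf(4) assms(1) by (intro sum_pos) auto
  define G where "G r m = (\<Sum>j\<in>{1..K}. if q j dvd (m - r) then \<bar>\<phi> m\<bar> else 0)" for r m
  define F where "F r t = (\<Sum>m\<in>{m. \<phi> m \<noteq> 0 \<and> m div p = t}. G r m)" for r t
  define D where "D = (\<lambda>m. m div p) ` supp"
  have fD: "finite D" using fsupp D_def by simp
  have F0: "F r t \<ge> 0" for r t unfolding F_def G_def by (intro sum_nonneg) auto
  have FD: "F r t \<noteq> 0 \<Longrightarrow> t \<in> D" for r t
  proof (rule ccontr)
    assume "F r t \<noteq> 0" "t \<notin> D"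
    hence "{m. \<phi> m \<noteq> 0 \<and> m div p = t} = {}" using D_def supp_def by auto
    thus False using \<open>F r t \<noteq> 0\<close> unfolding F_def by (metis sum.empty)
  qed
  have conv: "(\<Sum>j\<in>{1..K}. \<Sum>m\<in>{m. a*p \<le> m \<and> m < (b+1)*p \<and> q j dvd (m - n)}. \<bar>\<phi> m\<bar>)
      = (\<Sum>t\<in>{a..b}. F (n mod p) t)" if ab: "a = n div p" for n a b
  proof -
    define r where "r = n mod p"
    define S' where "S' = {m \<in> supp. a \<le> m div p \<and> m div p \<le> b}"
    have fS': "finite S'" using fsupp S'_def by simp
    have dv: "q j dvd (m - n) \<longleftrightarrow> q j dvd (m - r)" if j: "j \<in> {1..K}" for j m
    proof -
      have "m - r = (m - n) + p * a" using ab r_def by (simp add: algebra_simps div_mult_mod_eq)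
      moreover have "q j dvd p * a" using bf(2)[OF j] p_def by simp
      ultimately show ?thesis by (metis dvd_add_left_iff)
    qed
    have "(\<Sum>t\<in>{a..b}. F r t) = (\<Sum>t\<in>{a..b}. \<Sum>m\<in>{x. x \<in> S' \<and> x div p = t}. G r m)"
      unfolding F_def S'_def supp_def by (intro sum.cong refl arg_cong[where f="\<lambda>A. sum _ A"]) auto
    also have "\<dots> = (\<Sum>m\<in>S'. G r m)"
      using fS' by (intro sum.group) (auto simp: S'_def)
    also have "\<dots> = (\<Sum>j\<in>{1..K}. \<Sum>m\<in>S'. if q j dvd (m - r) then \<bar>\<phi> m\<bar> else 0)"
      unfolding G_def by (rule sum.swap)
    also have "\<dots> = (\<Sum>j\<in>{1..K}. \<Sum>m\<in>{m\<in>S'. q j dvd (m - r)}. \<bar>\<phi> m\<bar>)"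
      using fS' by (simp add: sum.inter_filter)
    also have "\<dots> = (\<Sum>j\<in>{1..K}. \<Sum>m\<in>{m. a*p \<le> m \<and> m < (b+1)*p \<and> q j dvd (m - n)}. \<bar>\<phi> m\<bar>)"
    proof (rule sum.cong[OF refl])
      fix j assume j: "j \<in> {1..K}"
      show "(\<Sum>m\<in>{m\<in>S'. q j dvd (m - r)}. \<bar>\<phi> m\<bar>)
          = (\<Sum>m\<in>{m. a*p \<le> m \<and> m < (b+1)*p \<and> q j dvd (m - n)}. \<bar>\<phi> m\<bar>)"
      proof (rule sum.mono_neutral_left)
        show "finite {m. a*p \<le> m \<and> m < (b+1)*p \<and> q j dvd (m - n)}"
          by (rule finite_subset[of _ "{a*p..<(b+1)*p}"]) auto
        show "{m\<in>S'. q j dvd (m - r)} \<subseteq> {m. a*p \<le> m \<and> m < (b+1)*p \<and> q j dvd (m - n)}"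
          using block_iff[OF p] dv[OF j] by (auto simp: S'_def)
        show "\<forall>i\<in>{m. a*p \<le> m \<and> m < (b+1)*p \<and> q j dvd (m - n)} - {m\<in>S'. q j dvd (m - r)}. \<bar>\<phi> i\<bar> = 0"
          using block_iff[OF p] dv[OF j] by (auto simp: S'_def supp_def)
      qed
    qed
    finally show ?thesis using r_def by simp
  qed
  have total: "(\<Sum>r\<in>{0..<p}. \<Sum>t\<in>D. F r t) = S * l1norm \<phi>"
  proof -
    have "(\<Sum>t\<in>D. F r t) = (\<Sum>m\<in>supp. G r m)" for r
    proof -
      have "(\<Sum>t\<in>D. F r t) = (\<Sum>t\<in>D. \<Sum>m\<in>{x. x \<in> supp \<and> x div p = t}. G r m)"
        unfolding F_def supp_def by simp
      also have "\<dots> = (\<Sum>m\<in>supp. G r m)" using fsupp fD D_def by (intro sum.group) auto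
      finally show ?thesis .
    qed
    hence "(\<Sum>r\<in>{0..<p}. \<Sum>t\<in>D. F r t) = (\<Sum>r\<in>{0..<p}. \<Sum>m\<in>supp. G r m)" by simp
    also have "\<dots> = (\<Sum>m\<in>supp. \<Sum>j\<in>{1..K}. \<Sum>r\<in>{0..<p}. if q j dvd (m - r) then \<bar>\<phi> m\<bar> else 0)"
      unfolding G_def by (simp add: sum.swap[of _ "{0..<p}"])
    also have "\<dots> = (\<Sum>m\<in>supp. \<Sum>j\<in>{1..K}. \<bar>\<phi> m\<bar> * real_of_int (qtilde K q j))"
    proof (rule sum.cong[OF refl], rule sum.cong[OF refl])
      fix m j assume j: "j \<in> {1..K}"
      have "(\<Sum>r\<in>{0..<p}. if q j dvd (m - r) then \<bar>\<phi> m\<bar> else 0)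
          = (\<Sum>r\<in>{r\<in>{0..<p}. q j dvd (m - r)}. \<bar>\<phi> m\<bar>)" by (rule sum.inter_filter[symmetric]) simp
      also have "\<dots> = \<bar>\<phi> m\<bar> * real (card {r\<in>{0..<p}. q j dvd (m - r)})" by simp
      also have "card {r\<in>{0..<p}. q j dvd (m - r)} = nat (p div q j)"
        using count_res[of "q j" p m] qpos j bf(2)[OF j] p p_def by simp
      also have "p div q j = qtilde K q j" using qtilde_def p_def by simp
      finally show "(\<Sum>r\<in>{0..<p}. if q j dvd (m - r) then \<bar>\<phi> m\<bar> else 0)
          = \<bar>\<phi> m\<bar> * real_of_int (qtilde K q j)" using bf(4)[OF j] by simp
    qed
    also have "\<dots> = S * l1norm \<phi>"
      unfolding S_def l1norm_def supp_def by (simp add: sum_distrib_left sum_distrib_right mult.commute)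
    finally show ?thesis .
  qed
  define c where "c = lam * S"
  have cpos: "c > 0" using Spos assms(6) c_def by simp
  define E where "E r = {a. \<exists>b\<ge>a. c * real_of_int (b - a + 1) < (\<Sum>t\<in>{a..b}. F r t)}" for r
  have osd: "finite (E r) \<and> c * real (card (E r)) \<le> (\<Sum>t\<in>D. F r t)" for r
    unfolding E_def using onesided[OF F0 fD FD cpos] .
  have sub: "{n::int. Bstar K q \<phi> n > ereal lam} \<subseteq> (\<Union>r\<in>{0..<p}. (\<lambda>a. a * p + r) ` E r)"
  proof
    fix n assume "n \<in> {n::int. Bstar K q \<phi> n > ereal lam}"
    then obtain N where N: "N \<in> {1..}" "ereal lam < ereal \<bar>B K q \<phi> n N\<bar>"
      unfolding Bstar_def by (auto simp: less_SUP_iff)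
    define a where "a = n div p"
    define b where "b = (n + int N) div p"
    have ab: "a \<le> b" unfolding a_def b_def using p by (intro zdiv_mono1) auto
    have "lam < \<bar>B K q \<phi> n N\<bar>" using N by simp
    also have "\<dots> \<le> (\<Sum>t\<in>{a..b}. F (n mod p) t) / (real_of_int (b - a + 1) * S)"
      using B_bound[OF qpos assms(1), of \<phi> n N] conv[of a n b] a_def b_def p_def S_def by simp
    finally have "c * real_of_int (b - a + 1) < (\<Sum>t\<in>{a..b}. F (n mod p) t)"
      using ab Spos c_def by (simp add: pos_less_divide_eq mult_ac)
    hence "a \<in> E (n mod p)" using ab E_def by auto
    moreover have "n = a * p + n mod p" using a_def by simp
    moreover have "n mod p \<in> {0..<p}" using p by simp
    ultimately show "n \<in> (\<Union>r\<in>{0..<p}. (\<lambda>a. a * p + r) ` E r)" by blast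
  qed
  have finU: "finite (\<Union>r\<in>{0..<p}. (\<lambda>a. a * p + r) ` E r)" using osd by auto
  have fin: "finite {n::int. Bstar K q \<phi> n > ereal lam}" using finite_subset[OF sub finU] .
  have "card {n::int. Bstar K q \<phi> n > ereal lam} \<le> card (\<Union>r\<in>{0..<p}. (\<lambda>a. a * p + r) ` E r)"
    using sub finU by (rule card_mono[rotated])
  also have "\<dots> \<le> (\<Sum>r\<in>{0..<p}. card ((\<lambda>a. a * p + r) ` E r))" by (rule card_UN_le) simp
  also have "\<dots> \<le> (\<Sum>r\<in>{0..<p}. card (E r))" by (intro sum_mono card_image_le) (use osd in auto)
  finally have "real (card {n::int. Bstar K q \<phi> n > ereal lam}) \<le> (\<Sum>r\<in>{0..<p}. real (card (E r)))"
    by (metis of_nat_le_iff of_nat_sum)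
  hence "c * real (card {n::int. Bstar K q \<phi> n > ereal lam}) \<le> (\<Sum>r\<in>{0..<p}. c * real (card (E r)))"
    using cpos by (simp add: sum_distrib_left[symmetric])
  also have "\<dots> \<le> (\<Sum>r\<in>{0..<p}. \<Sum>t\<in>D. F r t)" using osd by (intro sum_mono) auto
  also have "\<dots> = S * l1norm \<phi>" by (rule total)
  finally have "lam * real (card {n::int. Bstar K q \<phi> n > ereal lam}) \<le> l1norm \<phi>"
    using Spos c_def by (simp add: mult.assoc)
  moreover have "l1norm \<phi> \<ge> 0" unfolding l1norm_def by (simp add: sum_nonneg)
  ultimately have "real (card {n::int. Bstar K q \<phi> n > ereal lam}) \<le> 4 / lam * l1norm \<phi>"
    using assms(6) by (simp add: field_simps)
  with fin show ?thesis by blast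
qed

end
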